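(* Let $T$ be the Lr $(\mathbf a,\tau)$ interval exchange transformation, and assume that $\tau$ is irreducible and fully split and that $T$ satisfies the Keane Condition. Then the associated subshift $(X,S)$ has no doubly asymptotic pair of distinct points: if $\alpha,\beta\in X$ and there is $N\in\mathbb N$ with $\alpha_i=\beta_i$ for all $|i|\ge N$, then $\alpha=\beta$.
   Context: Fix $n\ge 2$, $[n]=\{1,\dots,n\}$, a vector $\mathbf a=(a_1,\dots,a_n)$ with all $a_i>0$ and $\sum_i a_i=1$, and a permutation $\tau$ of $[n]$. Put $b_0=0$, $b_i=\sum_{j=1}^i a_j$, $J_i=[b_{i-1},b_i)$, $\tilde J_i=(b_{i-1},b_i]$ for $i\in[n]$, and $D=\{b_1,\dots,b_{n-1}\}$. Put $b^\tau_0=0$, $b^\tau_i=\sum_{j=1}^i a_{\tau^{-1}(j)}$, $D^\tau=\{b^\tau_1,\dots,b^\tau_{n-1}\}$. The Lr $(\mathbf a,\tau)$ interval exchange transformation $T:[0,1)\to[0,1)$ and its dual $\tilde T:(0,1]\to(0,1]$ are defined by $x\mapsto x-b_{i-1}+b^\tau_{\tau(i)-1}$ for $x\in J_i$ (resp. $x\in\tilde J_i$); both are bijections. $\tau$ is irreducible if $\tau(\{1,\dots,j\})\ne\{1,\dots,j\}$ for $j=1,\dots,n-1$; split if $\tau(j+1)\ne\tau(j)+1$ for $j=1,\dots,n-1$; fully split if it is split and moreover $\tau(1)\ne\tau(n)+1$ and $\tau^{-1}(1)\ne\tau^{-1}(n)+1$. $T$ satisfies the Keane Condition if $D\cap T^k(D)=\emptyset$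 for all $k\in\mathbb N$. Let $\Omega=[n]^{\mathbb Z}$ with the product topology and shift $S(\alpha)_i=\alpha_{i+1}$. The itinerary maps $\mathcal I:[0,1)\to\Omega$, $\tilde{\mathcal I}:(0,1]\to\Omega$ are $\mathcal I(x)_k=i\iff T^kx\in J_i$ and $\tilde{\mathcal I}(x)_k=i\iff\tilde T^kx\in\tilde J_i$ ($k\in\mathbb Z$). Let $D_\infty=\{0,1\}\cup\bigcup_{k\in\mathbb Z}T^k(D)$, $R=[0,1]\setminus D_\infty$ (the regular points), $X_0=\mathcal I(R)$, and $X=\overline{X_0}$; $(X,S)$ is the associated subshift. *)

theory Defs
  imports "HOL-Analysis.Analysis" "HOL-Combinatorics.Permutations"
begin

text \<open>Indices run over [n] = {1..n}; a, tau are functions on nat, relevant on {1..n}.\<close>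

definition iet_b :: "(nat \<Rightarrow> real) \<Rightarrow> nat \<Rightarrow> real" where
  "iet_b a i = (\<Sum>j=1..i. a j)"

definition iet_btau :: "(nat \<Rightarrow> real) \<Rightarrow> (nat \<Rightarrow> nat) \<Rightarrow> nat \<Rightarrow> real" where
  "iet_btau a tau i = (\<Sum>j=1..i. a (inv tau j))"

definition iet_J :: "(nat \<Rightarrow> real) \<Rightarrow> nat \<Rightarrow> real set" where
  "iet_J a i = {iet_b a (i - 1) ..< iet_b a i}"

definition iet_D :: "nat \<Rightarrow> (nat \<Rightarrow> real) \<Rightarrow> real set" where
  "iet_D n a = iet_b a ` {1..n-1}"

text \<open>The Lr (a,tau) interval exchange T on [0,1) (value outside [0,1) irrelevant).\<close>
definition iet_T :: "nat \<Rightarrow> (nat \<Rightarrow> real) \<Rightarrow> (nat \<Rightarrow> nat) \<Rightarrow> real \<Rightarrow> real" where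
  "iet_T n a tau x =
     (if \<exists>i\<in>{1..n}. x \<in> iet_J a i
      then (let i = (THE i. i \<in> {1..n} \<and> x \<in> iet_J a i)
            in x - iet_b a (i - 1) + iet_btau a tau (tau i - 1))
      else x)"

definition iet_Tpow :: "nat \<Rightarrow> (nat \<Rightarrow> real) \<Rightarrow> (nat \<Rightarrow> nat) \<Rightarrow> int \<Rightarrow> real \<Rightarrow> real" where
  "iet_Tpow n a tau k =
     (if k \<ge> 0 then (iet_T n a tau) ^^ (nat k)
      else (inv_into {0..<1} (iet_T n a tau)) ^^ (nat (- k)))"

definition irreducible_perm :: "nat \<Rightarrow> (nat \<Rightarrow> nat) \<Rightarrow> bool" where
  "irreducible_perm n tau = (\<forall>j\<in>{1..n-1}. tau ` {1..j} \<noteq> {1..j})"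

definition split_perm :: "nat \<Rightarrow> (nat \<Rightarrow> nat) \<Rightarrow> bool" where
  "split_perm n tau = (\<forall>j\<in>{1..n-1}. tau (j + 1) \<noteq> tau j + 1)"

definition fully_split_perm :: "nat \<Rightarrow> (nat \<Rightarrow> nat) \<Rightarrow> bool" where
  "fully_split_perm n tau = (split_perm n tau \<and> tau 1 \<noteq> tau n + 1 \<and> inv tau 1 \<noteq> inv tau n + 1)"

definition keane_condition :: "nat \<Rightarrow> (nat \<Rightarrow> real) \<Rightarrow> (nat \<Rightarrow> nat) \<Rightarrow> bool" where
  "keane_condition n a tau =
     (\<forall>k::nat. k \<ge> 1 \<longrightarrow> iet_D n a \<inter> ((iet_T n a tau) ^^ k) ` iet_D n a = {})"

definition iet_Dinf :: "nat \<Rightarrow> (nat \<Rightarrow> real) \<Rightarrow> (nat \<Rightarrow> nat) \<Rightarrow> real set" where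
  "iet_Dinf n a tau = {0, 1} \<union> (\<Union>k::int. iet_Tpow n a tau k ` iet_D n a)"

definition iet_R :: "nat \<Rightarrow> (nat \<Rightarrow> real) \<Rightarrow> (nat \<Rightarrow> nat) \<Rightarrow> real set" where
  "iet_R n a tau = {0..1} - iet_Dinf n a tau"

definition iet_itin :: "nat \<Rightarrow> (nat \<Rightarrow> real) \<Rightarrow> (nat \<Rightarrow> nat) \<Rightarrow> real \<Rightarrow> int \<Rightarrow> nat" where
  "iet_itin n a tau x k = (THE i. i \<in> {1..n} \<and> iet_Tpow n a tau k x \<in> iet_J a i)"

text \<open>Associated subshift X: closure (product topology on int => nat, nat discrete) of I(R).\<close>
definition iet_X :: "nat \<Rightarrow> (nat \<Rightarrow> real) \<Rightarrow> (nat \<Rightarrow> nat) \<Rightarrow> (int \<Rightarrow> nat) set" where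
  "iet_X n a tau = closure (iet_itin n a tau ` iet_R n a tau)"

end

theory Submission
  imports Defs
begin

lemma closure_approx:
  fixes A :: "(int \<Rightarrow> nat) set"
  assumes "\<alpha> \<in> closure A"
  shows "\<exists>\<gamma>\<in>A. \<forall>k. \<bar>k\<bar> \<le> int M \<longrightarrow> \<gamma> k = \<alpha> k"
proof -
  let ?U = "\<Inter>k\<in>{-int M..int M}. (\<lambda>\<gamma>::int\<Rightarrow>nat. \<gamma> k) -` {\<alpha> k}"
  have op: "open ((\<lambda>\<gamma>::int\<Rightarrow>nat. \<gamma> k) -` {\<alpha> k})" for k
  proof -
    have "open {\<alpha> k}" by (rule open_discrete)
    then have "open ((\<lambda>\<gamma>::int\<Rightarrow>nat. \<gamma> k) -` {\<alpha> k} \<inter> UNIV)"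
      using continuous_on_product_coordinates[of k]
        continuous_on_open_vimage[OF open_UNIV, of "\<lambda>\<gamma>::int\<Rightarrow>nat. \<gamma> k"] by blast
    then show ?thesis by simp
  qed
  have "open ?U" by (rule open_INT) (simp_all add: op)
  moreover have "\<alpha> \<in> ?U" by auto
  ultimately have "?U \<inter> A \<noteq> {}"
    using assms unfolding closure_iff_nhds_not_empty by blast
  then obtain \<gamma> where "\<gamma> \<in> A" "\<gamma> \<in> ?U" by blast
  then show ?thesis by (intro bexI[of _ \<gamma>]) (auto simp: abs_le_iff)
qed


lemma sum_strict_pos:
  fixes c :: "nat \<Rightarrow> real"
  assumes "\<forall>i\<in>{1..n}. c i > 0" "i < j" "j \<le> n"
  shows "(\<Sum>k=1..i. c k) < (\<Sum>k=1..j. c k)"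
  using assms(2,3)
proof (induction j)
  case 0 then show ?case by simp
next
  case (Suc j)
  have "c (Suc j) > 0" using assms(1) Suc.prems by auto
  moreover have "(\<Sum>k=1..i. c k) \<le> (\<Sum>k=1..j. c k)"
    using Suc by (cases "i = j") auto
  ultimately show ?case by simp
qed

lemma part_exists:
  fixes f :: "nat \<Rightarrow> real"
  assumes "f 0 \<le> x" "x < f n"
  shows "\<exists>i\<in>{1..n}. f (i - 1) \<le> x \<and> x < f i"
proof -
  define i where "i = (LEAST i. x < f i)"
  have xi: "x < f i" unfolding i_def by (rule LeastI[of _ n]) (rule assms(2))
  have "i \<le> n" unfolding i_def by (rule Least_le) (rule assms(2))
  have "i \<noteq> 0" using xi assms(1) by (metis not_less)
  have "\<not> x < f (i - 1)"
  proof
    assume "x < f (i - 1)"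
    then have "i \<le> i - 1" unfolding i_def by (rule Least_le)
    then show False using \<open>i \<noteq> 0\<close> by simp
  qed
  then show ?thesis using xi \<open>i \<le> n\<close> \<open>i \<noteq> 0\<close> by (intro bexI[of _ i]) auto
qed

locale iet =
  fixes n :: nat and a :: "nat \<Rightarrow> real" and tau :: "nat \<Rightarrow> nat"
  assumes n2: "n \<ge> 2"
    and apos: "\<forall>i\<in>{1..n}. a i > 0"
    and asum: "(\<Sum>i=1..n. a i) = 1"
    and perm: "tau permutes {1..n}"
    and irr: "irreducible_perm n tau"
    and fs: "fully_split_perm n tau"
    and keane: "keane_condition n a tau"
begin

abbreviation "b \<equiv> iet_b a"
abbreviation "bt \<equiv> iet_btau a tau"
abbreviation "T \<equiv> iet_T n a tau"
abbreviation "J \<equiv> iet_J a"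
abbreviation "D \<equiv> iet_D n a"

lemma tau_in: "i \<in> {1..n} \<Longrightarrow> tau i \<in> {1..n}"
  using permutes_in_image[OF perm] by blast
lemma invtau_in: "i \<in> {1..n} \<Longrightarrow> inv tau i \<in> {1..n}"
  using permutes_in_image[OF permutes_inv[OF perm]] by blast
lemma tau_inv1: "tau (inv tau x) = x" using permutes_inverses[OF perm] by blast
lemma tau_inv2: "inv tau (tau x) = x" using permutes_inverses[OF perm] by blast
lemma tau_eq: "tau x = tau y \<longleftrightarrow> x = y" by (metis tau_inv2)

lemma b0: "b 0 = 0" by (simp add: iet_b_def)
lemma bt0: "bt 0 = 0" by (simp add: iet_btau_def)
lemma bn: "b n = 1" using asum by (simp add: iet_b_def)
lemma btn: "bt n = 1"
proof -
  have "bt n = sum (a \<circ> inv tau) {1..n}" by (simp add: iet_btau_def comp_def)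
  also have "\<dots> = sum a {1..n}" by (rule sum.permute[symmetric, OF permutes_inv[OF perm]])
  finally show ?thesis using asum by simp
qed
lemma b_Suc: "b (Suc i) = b i + a (Suc i)" by (simp add: iet_b_def)
lemma bt_Suc: "bt (Suc i) = bt i + a (inv tau (Suc i))" by (simp add: iet_btau_def)

lemma b_less: "i < j \<Longrightarrow> j \<le> n \<Longrightarrow> b i < b j"
  unfolding iet_b_def by (rule sum_strict_pos[OF apos])
lemma bt_less: "i < j \<Longrightarrow> j \<le> n \<Longrightarrow> bt i < bt j"
  unfolding iet_btau_def by (rule sum_strict_pos) (use apos invtau_in in auto)

lemma b_le: "i \<le> j \<Longrightarrow> j \<le> n \<Longrightarrow> b i \<le> b j"
  using b_less by (cases "i = j") (auto intro: less_imp_le)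
lemma bt_le: "i \<le> j \<Longrightarrow> j \<le> n \<Longrightarrow> bt i \<le> bt j"
  using bt_less by (cases "i = j") (auto intro: less_imp_le)
lemma b_less_iff: "i \<le> n \<Longrightarrow> j \<le> n \<Longrightarrow> b i < b j \<longleftrightarrow> i < j"
  using b_less[of i j] b_le[of j i] by linarith
lemma bt_less_iff: "i \<le> n \<Longrightarrow> j \<le> n \<Longrightarrow> bt i < bt j \<longleftrightarrow> i < j"
  using bt_less[of i j] bt_le[of j i] by linarith
lemma b_eq_iff: "i \<le> n \<Longrightarrow> j \<le> n \<Longrightarrow> b i = b j \<longleftrightarrow> i = j"
  using b_less[of i j] b_less[of j i] by (cases i j rule: linorder_cases) auto
lemma bt_eq_iff: "i \<le> n \<Longrightarrow> j \<le> n \<Longrightarrow> bt i = bt j \<longleftrightarrow> i = j"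
  using bt_less[of i j] bt_less[of j i] by (cases i j rule: linorder_cases) auto
lemma b_range: "i \<le> n \<Longrightarrow> 0 \<le> b i \<and> b i \<le> 1"
  using b_le[of 0 i] b_le[of i n] b0 bn by auto
lemma bt_range: "i \<le> n \<Longrightarrow> 0 \<le> bt i \<and> bt i \<le> 1"
  using bt_le[of 0 i] bt_le[of i n] bt0 btn by auto

lemma bt_tau: "i \<in> {1..n} \<Longrightarrow> bt (tau i) = bt (tau i - 1) + a i"
proof -
  assume i: "i \<in> {1..n}"
  then have "tau i \<ge> 1" using tau_in by auto
  then have "tau i = Suc (tau i - 1)" by simp
  then have "bt (tau i) = bt (tau i - 1) + a (inv tau (tau i))" by (metis bt_Suc)
  then show ?thesis by (simp add: tau_inv2)
qed

lemma J_unique: "i \<in> {1..n} \<Longrightarrow> k \<in> {1..n} \<Longrightarrow> x \<in> J i \<Longrightarrow> x \<in> J k \<Longrightarrow> i = k"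
proof (rule ccontr)
  assume *: "i \<in> {1..n}" "k \<in> {1..n}" "x \<in> J i" "x \<in> J k" "i \<noteq> k"
  show False
  proof (cases "i < k")
    case True
    then have "b i \<le> b (k - 1)" using * by (intro b_le) auto
    then show ?thesis using * by (auto simp: iet_J_def)
  next
    case False
    then have "b k \<le> b (i - 1)" using * by (intro b_le) auto
    then show ?thesis using * by (auto simp: iet_J_def)
  qed
qed

lemma J_exists: "0 \<le> x \<Longrightarrow> x < 1 \<Longrightarrow> \<exists>i\<in>{1..n}. x \<in> J i"
  using part_exists[of b x n] b0 bn by (auto simp: iet_J_def)

lemma T_J: "i \<in> {1..n} \<Longrightarrow> x \<in> J i \<Longrightarrow> T x = x - b (i - 1) + bt (tau i - 1)"
proof -
  assume i: "i \<in> {1..n}" "x \<in> J i"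
  have "(THE i. i \<in> {1..n} \<and> x \<in> J i) = i"
    using i J_unique by (intro the_equality) auto
  then show ?thesis using i unfolding iet_T_def by (auto simp: Let_def)
qed

lemma T_Jrange: "i \<in> {1..n} \<Longrightarrow> x \<in> J i \<Longrightarrow> bt (tau i - 1) \<le> T x \<and> T x < bt (tau i)"
  using T_J bt_tau b_Suc[of "i - 1"] by (auto simp: iet_J_def)

lemma T_range: "0 \<le> x \<Longrightarrow> x < 1 \<Longrightarrow> 0 \<le> T x \<and> T x < 1"
proof -
  assume "0 \<le> x" "x < 1"
  then obtain i where i: "i \<in> {1..n}" "x \<in> J i" using J_exists by blast
  then have "tau i \<in> {1..n}" using tau_in by blast
  then have "tau i - 1 \<le> n" "tau i \<le> n" by auto
  then show ?thesis using T_Jrange[OF i] bt_range[of "tau i - 1"] bt_range[of "tau i"] by linarith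
qed

lemma Tn_range: "0 \<le> x \<Longrightarrow> x < 1 \<Longrightarrow> 0 \<le> (T ^^ j) x \<and> (T ^^ j) x < 1"
  by (induction j) (auto simp: T_range)

lemma T_inj: "0 \<le> x \<Longrightarrow> x < 1 \<Longrightarrow> 0 \<le> y \<Longrightarrow> y < 1 \<Longrightarrow> T x = T y \<Longrightarrow> x = y"
proof -
  assume xy: "0 \<le> x" "x < 1" "0 \<le> y" "y < 1" "T x = T y"
  obtain i where i: "i \<in> {1..n}" "x \<in> J i" using J_exists xy by blast
  obtain k where k: "k \<in> {1..n}" "y \<in> J k" using J_exists xy by blast
  have ti: "tau i \<in> {1..n}" "tau k \<in> {1..n}" using i k tau_in by auto
  have "tau i = tau k"
  proof (rule ccontr)
    assume "tau i \<noteq> tau k"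
    then consider "tau i < tau k" | "tau k < tau i" by linarith
    then show False
    proof cases
      case 1
      then have "bt (tau i) \<le> bt (tau k - 1)" using ti by (intro bt_le) auto
      then show False using T_Jrange[OF i] T_Jrange[OF k] xy by linarith
    next
      case 2
      then have "bt (tau k) \<le> bt (tau i - 1)" using ti by (intro bt_le) auto
      then show False using T_Jrange[OF i] T_Jrange[OF k] xy by linarith
    qed
  qed
  then have "i = k" by (simp only: tau_eq)
  then have "T y = y - b (i - 1) + bt (tau i - 1)" using T_J[OF k] by simp
  then show ?thesis using T_J[OF i] xy(5) by linarith
qed

lemma Tn_inj: "0 \<le> x \<Longrightarrow> x < 1 \<Longrightarrow> 0 \<le> y \<Longrightarrow> y < 1 \<Longrightarrow> (T^^j) x = (T^^j) y \<Longrightarrow> x = y"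
proof (induction j)
  case 0 then show ?case by simp
next
  case (Suc j)
  have "T ((T^^j) x) = T ((T^^j) y)" using Suc.prems by simp
  then have "(T^^j) x = (T^^j) y" using T_inj Tn_range Suc.prems by blast
  then show ?case using Suc by blast
qed

lemma T_surj: "0 \<le> y \<Longrightarrow> y < 1 \<Longrightarrow> \<exists>x. 0 \<le> x \<and> x < 1 \<and> T x = y"
proof -
  assume y: "0 \<le> y" "y < 1"
  obtain m where m: "m \<in> {1..n}" "bt (m - 1) \<le> y" "y < bt m"
    using part_exists[of bt y n] bt0 btn y by auto
  define i where "i = inv tau m"
  have i: "i \<in> {1..n}" "tau i = m" using m invtau_in tau_inv1 i_def by auto
  define x where "x = y - bt (m - 1) + b (i - 1)"
  have "x \<in> J i" using bt_tau[OF i(1)] i m b_Suc[of "i - 1"] by (auto simp: x_def iet_J_def)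
  then have "T x = y" using T_J[OF i(1)] i by (simp add: x_def)
  moreover have "0 \<le> x \<and> x < 1"
  proof -
    have "i - 1 \<le> n" "i \<le> n" using i by auto
    then show ?thesis using \<open>x \<in> J i\<close> b_range[of "i - 1"] b_range[of i] unfolding iet_J_def by auto
  qed
  ultimately show ?thesis by blast
qed

end

context iet begin

definition sJ where "sJ p q \<longleftrightarrow> (\<exists>i\<in>{1..n}. p \<in> J i \<and> q \<in> J i)"

lemma J_sub: "i \<in> {1..n} \<Longrightarrow> x \<in> J i \<Longrightarrow> 0 \<le> x \<and> x < 1"
proof -
  assume i: "i \<in> {1..n}" "x \<in> J i"
  then have "i - 1 \<le> n" "i \<le> n" by auto
  then show ?thesis using i b_range[of "i - 1"] b_range[of i] unfolding iet_J_def by auto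
qed

lemma sJ_refl: "0 \<le> p \<Longrightarrow> p < 1 \<Longrightarrow> sJ p p"
  using J_exists unfolding sJ_def by blast
lemma sJ_sym: "sJ p q \<Longrightarrow> sJ q p"
  unfolding sJ_def by blast
lemma sJ_trans: "sJ p q \<Longrightarrow> sJ q r \<Longrightarrow> sJ p r"
  unfolding sJ_def using J_unique by blast
lemma sJ_range: "sJ p q \<Longrightarrow> 0 \<le> p \<and> p < 1 \<and> 0 \<le> q \<and> q < 1"
  unfolding sJ_def using J_sub by blast
lemma sJ_between: "sJ p q \<Longrightarrow> p \<le> z \<Longrightarrow> z \<le> q \<Longrightarrow> sJ p z"
  unfolding sJ_def iet_J_def by auto
lemma sJ_T: "sJ p q \<Longrightarrow> T q - T p = q - p"
proof -
  assume "sJ p q"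
  then obtain i where i: "i \<in> {1..n}" "p \<in> J i" "q \<in> J i" unfolding sJ_def by blast
  show ?thesis using T_J[OF i(1,2)] T_J[OF i(1,3)] by linarith
qed

lemma cross: "0 \<le> p \<Longrightarrow> p \<le> q \<Longrightarrow> q < 1 \<Longrightarrow> \<not> sJ p q \<Longrightarrow> \<exists>i\<in>{1..n-1}. p < b i \<and> b i \<le> q"
proof -
  assume pq: "0 \<le> p" "p \<le> q" "q < 1" "\<not> sJ p q"
  obtain i where i: "i \<in> {1..n}" "p \<in> J i" using J_exists pq by fastforce
  have "\<not> q < b i"
  proof
    assume "q < b i"
    then have "q \<in> J i" using i pq unfolding iet_J_def by auto
    then show False using i pq unfolding sJ_def by blast
  qed
  then have "i \<noteq> n" using bn pq by auto
  then show ?thesis using i \<open>\<not> q < b i\<close> unfolding iet_J_def by (intro bexI[of _ i]) auto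
qed

lemma seg:
  assumes "0 \<le> u" "u \<le> v" "v < 1" "\<forall>j<m. sJ ((T^^j) u) ((T^^j) v)" "u \<le> z" "z \<le> v"
  shows "(T^^m) z = (T^^m) u + (z - u) \<and> (\<forall>j<m. sJ ((T^^j) u) ((T^^j) z))"
  using assms(4-6)
proof (induction m arbitrary: z)
  case 0 then show ?case by simp
next
  case (Suc m)
  have h: "\<forall>j<m. sJ ((T^^j) u) ((T^^j) v)" using Suc.prems by auto
  have z: "(T^^m) z = (T^^m) u + (z - u)" "\<forall>j<m. sJ ((T^^j) u) ((T^^j) z)"
    using Suc.IH[OF h Suc.prems(2,3)] by auto
  have v: "(T^^m) v = (T^^m) u + (v - u)" using Suc.IH[OF h, of v] assms(2) by auto
  have s: "sJ ((T^^m) u) ((T^^m) v)" using Suc.prems by auto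
  have sz: "sJ ((T^^m) u) ((T^^m) z)"
    using sJ_between[OF s] z(1) v Suc.prems(2,3) by auto
  have "T ((T^^m) z) - T ((T^^m) u) = (T^^m) z - (T^^m) u" by (rule sJ_T[OF sz])
  then have "(T^^Suc m) z = (T^^Suc m) u + (z - u)" using z(1) by simp
  moreover have "\<forall>j<Suc m. sJ ((T^^j) u) ((T^^j) z)"
    using z(2) sz less_Suc_eq by auto
  ultimately show ?case by blast
qed

lemma funpow_comm: "(T^^j) ((T^^k) x) = (T^^(j+k)) x"
  by (simp add: funpow_add)

lemma keaneD: "d \<in> D \<Longrightarrow> k \<ge> 1 \<Longrightarrow> (T^^k) d \<notin> D"
  using keane unfolding keane_condition_def by blast

lemma D_eq: "D = b ` {1..n-1}" by (simp add: iet_D_def)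

definition "i0 = inv tau 1"
definition "e = b (i0 - 1)"

lemma i0: "i0 \<in> {2..n}" "tau i0 = 1"
proof -
  have "1 \<in> {1..n-1}" using n2 by auto
  then have "tau ` {1..1} \<noteq> {1..1}" using irr unfolding irreducible_perm_def by blast
  then have "tau 1 \<noteq> 1" by auto
  have "1 \<in> {1..n}" using n2 by auto
  then have "i0 \<in> {1..n}" unfolding i0_def by (rule invtau_in)
  moreover show "tau i0 = 1" unfolding i0_def by (rule tau_inv1)
  ultimately show "i0 \<in> {2..n}" using \<open>tau 1 \<noteq> 1\<close> by (cases "i0 = 1") auto
qed

lemma e_D: "e \<in> D"
proof -
  have "i0 - 1 \<in> {1..n-1}" using i0 by auto
  then show ?thesis unfolding D_eq e_def by blast
qed

lemma Te: "T e = 0"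
proof -
  have "i0 \<in> {1..n}" using i0 by auto
  moreover have "e \<in> J i0" unfolding e_def iet_J_def using b_less[of "i0 - 1" i0] i0 by auto
  ultimately have "T e = e - b (i0 - 1) + bt (tau i0 - 1)" by (rule T_J)
  then show ?thesis using i0 bt0 by (simp add: e_def)
qed

lemma D_range: "d \<in> D \<Longrightarrow> 0 < d \<and> d < 1"
  unfolding D_eq using b_less[of 0] b_less[of _ n] b0 bn by fastforce

lemma e_range: "0 \<le> e \<and> e < 1" using D_range[OF e_D] by auto

lemma no_periodic:
  assumes x: "0 \<le> x" "x < 1" and p: "p \<ge> 1" and per: "(T^^p) x = x"
  shows False
proof -
  define Bad where "Bad = {z. 0 \<le> z \<and> z \<le> x \<and> (\<exists>j<p. (T^^j) z \<in> insert 0 D)}"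
  have fin: "finite Bad"
  proof -
    have "Bad \<subseteq> (\<Union>j<p. (T^^j) -` (insert 0 D) \<inter> {0..<1})"
      unfolding Bad_def using x by auto
    moreover have "finite ((T^^j) -` (insert 0 D) \<inter> {0..<1})" for j
    proof (rule finite_vimage_IntI)
      show "finite (insert 0 D)" unfolding D_eq by simp
      show "inj_on (T^^j) {0..<1}" by (rule inj_onI) (use Tn_inj in auto)
    qed
    ultimately show ?thesis by (meson finite_UN_I finite_lessThan finite_subset)
  qed
  have "0 \<in> Bad" unfolding Bad_def using x p by (auto intro!: exI[of _ 0])
  define l where "l = Max Bad"
  have lB: "l \<in> Bad" unfolding l_def using fin \<open>0 \<in> Bad\<close> by (intro Max_in) auto
  have lmax: "z \<in> Bad \<Longrightarrow> z \<le> l" for z unfolding l_def using fin by simp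
  have l: "0 \<le> l" "l \<le> x" using lB unfolding Bad_def by auto
  have allsJ: "m \<le> p \<Longrightarrow> \<forall>j<m. sJ ((T^^j) l) ((T^^j) x)" for m
  proof (induction m)
    case 0 then show ?case by simp
  next
    case (Suc m)
    have IH: "\<forall>j<m. sJ ((T^^j) l) ((T^^j) x)" using Suc by auto
    have sg: "\<And>z. l \<le> z \<Longrightarrow> z \<le> x \<Longrightarrow> (T^^m) z = (T^^m) l + (z - l)"
      using seg[OF l(1) l(2) x(2) IH] by blast
    have "sJ ((T^^m) l) ((T^^m) x)"
    proof (rule ccontr)
      assume ns: "\<not> sJ ((T^^m) l) ((T^^m) x)"
      have r: "0 \<le> (T^^m) l" "(T^^m) x < 1" using Tn_range l x by auto
      have "(T^^m) l \<le> (T^^m) x" using sg[of x] l by auto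
      then obtain i where i: "i \<in> {1..n-1}" "(T^^m) l < b i" "b i \<le> (T^^m) x"
        using cross[OF r(1) _ r(2) ns] by blast
      define z where "z = l + (b i - (T^^m) l)"
      have zr: "l < z" "z \<le> x" using i sg[of x] l unfolding z_def by auto
      have "(T^^m) z = b i" using sg[of z] zr unfolding z_def by auto
      then have "z \<in> Bad" unfolding Bad_def using zr l Suc.prems i
        by (auto simp: D_eq intro!: exI[of _ m])
      then show False using lmax zr by fastforce
    qed
    then show ?case using IH less_Suc_eq by auto
  qed
  have "(T^^p) x = (T^^p) l + (x - l)" using seg[OF l(1) l(2) x(2) allsJ[OF order_refl]] l by blast
  then have perl: "(T^^p) l = l" using per by linarith
  obtain j where j: "j < p" "(T^^j) l \<in> insert 0 D" using lB unfolding Bad_def by blast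
  define d where "d = (T^^j) l"
  have perd: "(T^^p) d = d" unfolding d_def using perl by (metis funpow_comm add.commute)
  show False
  proof (cases "d = 0")
    case False
    then have "d \<in> D" using j d_def by auto
    then show False using keaneD[OF _ p] perd by metis
  next
    case True
    have "T ((T^^p) e) = (T^^p) (T e)" by (simp add: funpow_swap1)
    also have "\<dots> = T e" using Te perd True by simp
    finally have "(T^^p) e = e"
      using T_inj Tn_range e_range by blast
    then show False using keaneD[OF e_D p] e_D by metis
  qed
qed

end

context iet begin

definition CI where "CI lo hi \<longleftrightarrow> 0 \<le> lo \<and> lo < hi \<and> hi < 1 \<and> (\<forall>j. sJ ((T^^j) lo) ((T^^j) hi))"

lemma CI_seg: "CI lo hi \<Longrightarrow> lo \<le> z \<Longrightarrow> z \<le> hi \<Longrightarrow>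
   (T^^m) z = (T^^m) lo + (z - lo) \<and> (\<forall>j<m. sJ ((T^^j) lo) ((T^^j) z))"
  unfolding CI_def by (intro seg) auto

lemma CI_sJ: "CI lo hi \<Longrightarrow> lo \<le> z \<Longrightarrow> z \<le> hi \<Longrightarrow> sJ ((T^^q) lo) ((T^^q) z)"
  using CI_seg[of lo hi z "Suc q"] by auto

lemma growth_step:
  assumes ci: "CI lo hi" and tp: "(T^^p) lo = lo + t" and t: "t \<noteq> 0" "\<bar>t\<bar> \<le> hi - lo"
  shows "\<exists>lo' hi'. CI lo' hi' \<and> (T^^p) lo' = lo' + t \<and> hi' - lo' = hi - lo + \<bar>t\<bar>"
proof -
  have tphi: "(T^^p) hi = hi + t" using CI_seg[OF ci, of hi p] ci tp unfolding CI_def by auto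
  have rng: "0 \<le> lo" "lo < hi" "hi < 1" using ci unfolding CI_def by auto
  have r1: "0 \<le> lo + t \<and> lo + t < 1" using Tn_range[of lo p] rng tp by auto
  have r2: "0 \<le> hi + t \<and> hi + t < 1" using Tn_range[of hi p] rng tphi by auto
  have big: "sJ ((T^^q) ((T^^p) lo)) ((T^^q) ((T^^p) hi))" for q
    using ci unfolding CI_def funpow_comm by blast
  show ?thesis
  proof (cases "t > 0")
    case True
    have "CI lo (hi + t)"
      unfolding CI_def
    proof (intro conjI allI)
      fix q
      have "sJ ((T^^q) lo) ((T^^q) (lo + t))" using CI_sJ[OF ci, of "lo + t" q] True t by linarith
      moreover have "sJ ((T^^q) (lo + t)) ((T^^q) (hi + t))" using big[of q] tp tphi by simp
      ultimately show "sJ ((T^^q) lo) ((T^^q) (hi + t))" by (rule sJ_trans)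
    qed (use rng r2 True in auto)
    then show ?thesis using tp True by (intro exI[of _ lo] exI[of _ "hi + t"]) auto
  next
    case False
    then have tn: "t < 0" using t by auto
    have ci2: "CI (lo + t) hi"
      unfolding CI_def
    proof (intro conjI allI)
      fix q
      have "sJ ((T^^q) (lo + t)) ((T^^q) (hi + t))" using big[of q] tp tphi by simp
      moreover have "sJ ((T^^q) (hi + t)) ((T^^q) hi)"
      proof -
        have a1: "sJ ((T^^q) lo) ((T^^q) (hi + t))" using CI_sJ[OF ci, of "hi + t" q] tn t rng by linarith
        have a2: "sJ ((T^^q) lo) ((T^^q) hi)" using CI_sJ[OF ci, of hi q] rng by linarith
        show ?thesis by (rule sJ_trans[OF sJ_sym[OF a1] a2])
      qed
      ultimately show "sJ ((T^^q) (lo + t)) ((T^^q) hi)" by (rule sJ_trans)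
    qed (use rng r1 tn in auto)
    have "(T^^p) lo = (T^^p) (lo + t) + (lo - (lo + t))"
      using CI_seg[OF ci2, of lo p] tn rng by auto
    then have "(T^^p) (lo + t) = (lo + t) + t" using tp by linarith
    then show ?thesis using ci2 tn by (intro exI[of _ "lo + t"] exI[of _ hi]) auto
  qed
qed

lemma growth_iter:
  assumes ci: "CI lo hi" and tp: "(T^^p) lo = lo + t" and t: "t \<noteq> 0" "\<bar>t\<bar> \<le> hi - lo"
  shows "\<exists>lo' hi'. CI lo' hi' \<and> (T^^p) lo' = lo' + t \<and> hi' - lo' = hi - lo + real m * \<bar>t\<bar>"
proof (induction m)
  case 0 then show ?case using ci tp by auto
next
  case (Suc m)
  then obtain lo' hi' where h: "CI lo' hi'" "(T^^p) lo' = lo' + t" "hi' - lo' = hi - lo + real m * \<bar>t\<bar>"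
    by blast
  have "\<bar>t\<bar> \<le> hi' - lo'" using h(3) t by (simp add: add_increasing2)
  then obtain lo2 hi2 where "CI lo2 hi2" "(T^^p) lo2 = lo2 + t" "hi2 - lo2 = hi' - lo' + \<bar>t\<bar>"
    using growth_step[OF h(1,2) t(1)] by blast
  then show ?case using h(3) by (intro exI[of _ lo2] exI[of _ hi2]) (auto simp: algebra_simps)
qed

lemma no_CI: "CI u v \<Longrightarrow> False"
proof -
  assume ci: "CI u v"
  define l where "l = v - u"
  have rng: "0 \<le> u" "u < v" "v < 1" using ci unfolding CI_def by auto
  have l: "l > 0" using rng l_def by auto
  define B where "B = nat \<lfloor>1 / l\<rfloor>"
  define h where "h j = nat \<lfloor>(T^^j) u / l\<rfloor>" for j
  have hB: "h j \<in> {0..B}" for j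
  proof -
    have "(T^^j) u / l \<le> 1 / l" using Tn_range[of u j] rng l by (auto simp: divide_right_mono)
    then show ?thesis unfolding h_def B_def by (auto intro: nat_mono floor_mono)
  qed
  have "\<not> inj_on h {0..Suc B}"
  proof
    assume "inj_on h {0..Suc B}"
    then have "card (h ` {0..Suc B}) = card {0..Suc B}" by (rule card_image)
    moreover have "card (h ` {0..Suc B}) \<le> card {0..B}"
      by (rule card_mono) (use hB in auto)
    ultimately show False by simp
  qed
  then obtain j k where jk: "j \<noteq> k" "h j = h k" unfolding inj_on_def by blast
  have close: "\<bar>(T^^j) u - (T^^k) u\<bar> < l" if "h j = h k" for j k
  proof -
    define x where "x = (T^^j) u / l"
    define y where "y = (T^^k) u / l"
    have nn: "0 \<le> x" "0 \<le> y" using Tn_range[of u j] Tn_range[of u k] rng l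
      unfolding x_def y_def by auto
    have fe: "\<lfloor>x\<rfloor> = \<lfloor>y\<rfloor>" using that nn unfolding h_def x_def y_def by (simp add: eq_nat_nat_iff)
    have "of_int \<lfloor>x\<rfloor> \<le> x" "x < of_int \<lfloor>x\<rfloor> + 1" "of_int \<lfloor>y\<rfloor> \<le> y" "y < of_int \<lfloor>y\<rfloor> + 1"
      by (simp_all add: of_int_floor_le)
    then have xy: "\<bar>x - y\<bar> < 1" using fe by linarith
    have "(T^^j) u - (T^^k) u = (x - y) * l" unfolding x_def y_def using l by (simp add: field_simps)
    then have "\<bar>(T^^j) u - (T^^k) u\<bar> = \<bar>x - y\<bar> * l" using l by (simp add: abs_mult)
    also have "\<dots> < 1 * l" using xy l by (intro mult_strict_right_mono) auto
    finally show ?thesis by simp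
  qed
  obtain j k where jk: "j < k" "\<bar>(T^^j) u - (T^^k) u\<bar> < l"
  proof (cases "j < k")
    case True then show ?thesis using that close jk by blast
  next
    case False then have "k < j" using jk by auto
    then show ?thesis using that close[of k j] jk by auto
  qed
  define w where "w = (T^^j) u"
  have sv: "(T^^j) v = w + l" using CI_seg[OF ci, of v j] rng unfolding w_def l_def by auto
  have ciw: "CI w (w + l)"
    unfolding CI_def
  proof (intro conjI allI)
    fix q
    have e1: "(T^^q) w = (T^^(q+j)) u" unfolding w_def by (rule funpow_comm)
    have e2: "(T^^q) (w + l) = (T^^(q+j)) v" unfolding sv[symmetric] by (rule funpow_comm)
    show "sJ ((T^^q) w) ((T^^q) (w + l))"
      unfolding e1 e2 using ci unfolding CI_def by blast
  next
    show "0 \<le> w" using Tn_range[of u j] rng unfolding w_def by auto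
    show "w < w + l" using l by simp
    show "w + l < 1" using Tn_range[of v j] rng sv by auto
  qed
  define p where "p = k - j"
  have p: "p \<ge> 1" using jk p_def by auto
  define t where "t = (T^^k) u - w"
  have tp: "(T^^p) w = w + t" unfolding t_def w_def p_def funpow_comm using jk by simp
  show False
  proof (cases "t = 0")
    case True
    then show False using no_periodic[of w p] tp p Tn_range[of u j] rng w_def by auto
  next
    case False
    have tl: "\<bar>t\<bar> \<le> (w + l) - w" using jk unfolding t_def w_def by auto
    obtain m :: nat where m: "1 < real m * \<bar>t\<bar>" using reals_Archimedean3[of "\<bar>t\<bar>"] False by auto
    obtain lo' hi' where "CI lo' hi'" "hi' - lo' = (w + l) - w + real m * \<bar>t\<bar>"
      using growth_iter[OF ciw tp False tl, of m] by blast
    then show False using m l unfolding CI_def by auto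
  qed
qed

lemma unifL:
  assumes eps: "\<epsilon> > 0"
  shows "\<exists>K. \<forall>u v. 0 \<le> u \<longrightarrow> u \<le> v \<longrightarrow> v < 1 \<longrightarrow> (\<forall>j\<le>K. sJ ((T^^j) u) ((T^^j) v)) \<longrightarrow> v - u < \<epsilon>"
proof -
  define h where "h = \<epsilon> / 2"
  have h: "h > 0" using eps h_def by auto
  define G where "G = nat \<lceil>1 / h\<rceil>"
  define kf where "kf g = (LEAST j. \<not> sJ ((T^^j) (real g * h)) ((T^^j) (real (Suc g) * h)))" for g
  have kf: "\<not> sJ ((T^^kf g) (real g * h)) ((T^^kf g) (real (Suc g) * h))"
    if "real (Suc g) * h < 1" for g
  proof -
    have "\<not> CI (real g * h) (real (Suc g) * h)" using no_CI by blast
    then have "\<exists>j. \<not> sJ ((T^^j) (real g * h)) ((T^^j) (real (Suc g) * h))"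
      using that h unfolding CI_def by (auto simp: distrib_right)
    then show ?thesis unfolding kf_def by (rule LeastI_ex)
  qed
  define K where "K = Max (kf ` {0..G})"
  show ?thesis
  proof (intro exI[of _ K] allI impI)
    fix u v :: real
    assume uv: "0 \<le> u" "u \<le> v" "v < 1" and all: "\<forall>j\<le>K. sJ ((T^^j) u) ((T^^j) v)"
    show "v - u < \<epsilon>"
    proof (rule ccontr)
      assume "\<not> v - u < \<epsilon>"
      then have big: "v - u \<ge> 2 * h" using h_def by auto
      define g where "g = nat \<lceil>u / h\<rceil>"
      have g1: "real g = \<lceil>u / h\<rceil>" unfolding g_def using uv h by auto
      have ga: "u \<le> real g * h" using g1 h by (metis le_of_int_ceiling pos_divide_le_eq)
      have gb: "real g * h < u + h"
      proof -
        have "real g < u / h + 1" using g1 by linarith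
        then show ?thesis using h by (simp add: field_simps)
      qed
      have gs: "real (Suc g) * h < 1" using gb big uv by (simp add: distrib_right)
      have gG: "g \<in> {0..G}"
      proof -
        have "real g * h < 1" using gs h by (simp add: distrib_right)
        then have "real g < 1 / h" using h by (simp add: field_simps)
        then have "real g \<le> of_int \<lceil>1 / h\<rceil>" using le_of_int_ceiling[of "1 / h"] by linarith
        then have "int g \<le> \<lceil>1 / h\<rceil>" by linarith
        then show ?thesis unfolding G_def by auto
      qed
      have kK: "kf g \<le> K" unfolding K_def using gG by auto
      have s1: "sJ ((T^^kf g) u) ((T^^kf g) (real g * h))"
        using seg[OF uv(1,2,3), of "Suc (kf g)" "real g * h"] all kK ga gb big by auto
      have s2: "sJ ((T^^kf g) u) ((T^^kf g) (real (Suc g) * h))"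
        using seg[OF uv(1,2,3), of "Suc (kf g)" "real (Suc g) * h"] all kK ga gb big
        by (auto simp: distrib_right)
      have "sJ ((T^^kf g) (real g * h)) ((T^^kf g) (real (Suc g) * h))"
        using s1 s2 sJ_sym sJ_trans by blast
      then show False using kf[OF gs] by blast
    qed
  qed
qed

end


lemma part_exists2:
  fixes f :: "nat \<Rightarrow> real"
  assumes "f 0 < x" "x \<le> f n"
  shows "\<exists>i\<in>{1..n}. f (i - 1) < x \<and> x \<le> f i"
proof -
  define i where "i = (LEAST i. x \<le> f i)"
  have xi: "x \<le> f i" unfolding i_def by (rule LeastI[of _ n]) (rule assms(2))
  have "i \<le> n" unfolding i_def by (rule Least_le) (rule assms(2))
  have "i \<noteq> 0" using xi assms(1) by (metis not_less)
  have "\<not> x \<le> f (i - 1)"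
  proof
    assume "x \<le> f (i - 1)"
    then have "i \<le> i - 1" unfolding i_def by (rule Least_le)
    then show False using \<open>i \<noteq> 0\<close> by simp
  qed
  then show ?thesis using xi \<open>i \<le> n\<close> \<open>i \<noteq> 0\<close> by (intro bexI[of _ i]) auto
qed

context iet begin

definition Jt where "Jt i = {b (i - 1)<..b i}"
definition Tt where "Tt z = (let i = (THE i. i \<in> {1..n} \<and> z \<in> Jt i) in z - b (i - 1) + bt (tau i - 1))"

lemma Jt_unique: "i \<in> {1..n} \<Longrightarrow> k \<in> {1..n} \<Longrightarrow> x \<in> Jt i \<Longrightarrow> x \<in> Jt k \<Longrightarrow> i = k"
proof (rule ccontr)
  assume *: "i \<in> {1..n}" "k \<in> {1..n}" "x \<in> Jt i" "x \<in> Jt k" "i \<noteq> k"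
  show False
  proof (cases "i < k")
    case True
    then have "b i \<le> b (k - 1)" using * by (intro b_le) auto
    then show ?thesis using * by (auto simp: Jt_def)
  next
    case False
    then have "b k \<le> b (i - 1)" using * by (intro b_le) auto
    then show ?thesis using * by (auto simp: Jt_def)
  qed
qed

lemma Jt_exists: "0 < x \<Longrightarrow> x \<le> 1 \<Longrightarrow> \<exists>i\<in>{1..n}. x \<in> Jt i"
  using part_exists2[of b x n] b0 bn by (auto simp: Jt_def)

lemma Tt_J: "i \<in> {1..n} \<Longrightarrow> x \<in> Jt i \<Longrightarrow> Tt x = x - b (i - 1) + bt (tau i - 1)"
proof -
  assume i: "i \<in> {1..n}" "x \<in> Jt i"
  have "(THE i. i \<in> {1..n} \<and> x \<in> Jt i) = i"
    using i Jt_unique by (intro the_equality) auto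
  then show ?thesis unfolding Tt_def by (simp add: Let_def)
qed

lemma Tt_Jrange: "i \<in> {1..n} \<Longrightarrow> x \<in> Jt i \<Longrightarrow> bt (tau i - 1) < Tt x \<and> Tt x \<le> bt (tau i)"
  using Tt_J bt_tau b_Suc[of "i - 1"] by (auto simp: Jt_def)

lemma Tt_range: "0 < x \<Longrightarrow> x \<le> 1 \<Longrightarrow> 0 < Tt x \<and> Tt x \<le> 1"
proof -
  assume "0 < x" "x \<le> 1"
  then obtain i where i: "i \<in> {1..n}" "x \<in> Jt i" using Jt_exists by blast
  then have "tau i \<in> {1..n}" using tau_in by blast
  then have "tau i - 1 \<le> n" "tau i \<le> n" by auto
  then show ?thesis using Tt_Jrange[OF i] bt_range[of "tau i - 1"] bt_range[of "tau i"] by linarith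
qed

lemma Ttn_range: "0 < x \<Longrightarrow> x \<le> 1 \<Longrightarrow> 0 < (Tt ^^ j) x \<and> (Tt ^^ j) x \<le> 1"
  by (induction j) (auto simp: Tt_range)

lemma Tt_inj: "0 < x \<Longrightarrow> x \<le> 1 \<Longrightarrow> 0 < y \<Longrightarrow> y \<le> 1 \<Longrightarrow> Tt x = Tt y \<Longrightarrow> x = y"
proof -
  assume xy: "0 < x" "x \<le> 1" "0 < y" "y \<le> 1" "Tt x = Tt y"
  obtain i where i: "i \<in> {1..n}" "x \<in> Jt i" using Jt_exists xy by blast
  obtain k where k: "k \<in> {1..n}" "y \<in> Jt k" using Jt_exists xy by blast
  have ti: "tau i \<in> {1..n}" "tau k \<in> {1..n}" using i k tau_in by auto
  have "tau i = tau k"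
  proof (rule ccontr)
    assume "tau i \<noteq> tau k"
    then consider "tau i < tau k" | "tau k < tau i" by linarith
    then show False
    proof cases
      case 1
      then have "bt (tau i) \<le> bt (tau k - 1)" using ti by (intro bt_le) auto
      then show False using Tt_Jrange[OF i] Tt_Jrange[OF k] xy by linarith
    next
      case 2
      then have "bt (tau k) \<le> bt (tau i - 1)" using ti by (intro bt_le) auto
      then show False using Tt_Jrange[OF i] Tt_Jrange[OF k] xy by linarith
    qed
  qed
  then have "i = k" by (simp only: tau_eq)
  then have "Tt y = y - b (i - 1) + bt (tau i - 1)" using Tt_J[OF k] by simp
  then show ?thesis using Tt_J[OF i] xy(5) by linarith
qed

lemma Tt_b: "i \<in> {1..n} \<Longrightarrow> Tt (b i) = bt (tau i)"
proof -
  assume i: "i \<in> {1..n}"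
  have "b i \<in> Jt i" unfolding Jt_def using b_less[of "i - 1" i] i by auto
  then show ?thesis using Tt_J[OF i] bt_tau[OF i] b_Suc[of "i - 1"] i by simp
qed

lemma T_b: "i \<in> {1..n} \<Longrightarrow> T (b (i - 1)) = bt (tau i - 1)"
proof -
  assume i: "i \<in> {1..n}"
  have "b (i - 1) \<in> J i" unfolding iet_J_def using b_less[of "i - 1" i] i by auto
  then show ?thesis using T_J[OF i] by simp
qed

lemma T_eq_Tt: "0 < z \<Longrightarrow> z < 1 \<Longrightarrow> z \<notin> D \<Longrightarrow> T z = Tt z"
proof -
  assume z: "0 < z" "z < 1" "z \<notin> D"
  obtain i where i: "i \<in> {1..n}" "z \<in> J i" using J_exists[of z] z by auto
  have "z \<noteq> b (i - 1)"
  proof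
    assume zb: "z = b (i - 1)"
    show False
    proof (cases "i = 1")
      case True then show False using zb z b0 by simp
    next
      case False
      then have "i - 1 \<in> {1..n-1}" using i by auto
      then show False using zb z(3) unfolding D_eq by blast
    qed
  qed
  then have "z \<in> Jt i" using i unfolding iet_J_def Jt_def by auto
  then show ?thesis using T_J[OF i] Tt_J[OF i(1)] by simp
qed

lemma left_track: "0 < z \<Longrightarrow> z \<le> 1 \<Longrightarrow> \<exists>\<eta>>0. \<forall>\<delta>. 0 < \<delta> \<and> \<delta> < \<eta> \<longrightarrow> (T^^m) (z - \<delta>) = (Tt^^m) z - \<delta>"
proof (induction m)
  case 0 then show ?case by (intro exI[of _ 1]) auto
next
  case (Suc m)
  then obtain \<eta> where eta: "\<eta> > 0" "\<forall>\<delta>. 0 < \<delta> \<and> \<delta> < \<eta> \<longrightarrow> (T^^m) (z - \<delta>) = (Tt^^m) z - \<delta>" by blast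
  define w where "w = (Tt^^m) z"
  have w: "0 < w" "w \<le> 1" using Ttn_range Suc.prems w_def by auto
  obtain i where i: "i \<in> {1..n}" "w \<in> Jt i" using Jt_exists w by blast
  define \<eta>' where "\<eta>' = min \<eta> (w - b (i - 1))"
  have "\<eta>' > 0" using eta i unfolding \<eta>'_def Jt_def by auto
  moreover have "(T^^Suc m) (z - \<delta>) = (Tt^^Suc m) z - \<delta>" if d: "0 < \<delta>" "\<delta> < \<eta>'" for \<delta>
  proof -
    have "(T^^m) (z - \<delta>) = w - \<delta>" using eta d unfolding \<eta>'_def w_def by auto
    moreover have "w - \<delta> \<in> J i" using i d unfolding \<eta>'_def Jt_def iet_J_def by auto
    ultimately have "(T^^Suc m) (z - \<delta>) = w - \<delta> - b (i - 1) + bt (tau i - 1)"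
      using T_J[OF i(1)] by simp
    moreover have "(Tt^^Suc m) z = w - b (i - 1) + bt (tau i - 1)"
      using Tt_J[OF i] unfolding w_def by simp
    ultimately show ?thesis by simp
  qed
  ultimately show ?case by blast
qed

lemma right_track: "0 \<le> z \<Longrightarrow> z < 1 \<Longrightarrow> \<exists>\<eta>>0. \<forall>\<delta>. 0 \<le> \<delta> \<and> \<delta> < \<eta> \<longrightarrow> (T^^m) (z + \<delta>) = (T^^m) z + \<delta>"
proof (induction m)
  case 0 then show ?case by (intro exI[of _ 1]) auto
next
  case (Suc m)
  then obtain \<eta> where eta: "\<eta> > 0" "\<forall>\<delta>. 0 \<le> \<delta> \<and> \<delta> < \<eta> \<longrightarrow> (T^^m) (z + \<delta>) = (T^^m) z + \<delta>" by blast
  define w where "w = (T^^m) z"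
  have w: "0 \<le> w" "w < 1" using Tn_range Suc.prems w_def by auto
  obtain i where i: "i \<in> {1..n}" "w \<in> J i" using J_exists w by blast
  define \<eta>' where "\<eta>' = min \<eta> (b i - w)"
  have "\<eta>' > 0" using eta i unfolding \<eta>'_def iet_J_def by auto
  moreover have "(T^^Suc m) (z + \<delta>) = (T^^Suc m) z + \<delta>" if d: "0 \<le> \<delta>" "\<delta> < \<eta>'" for \<delta>
  proof -
    have "(T^^m) (z + \<delta>) = w + \<delta>" using eta d unfolding \<eta>'_def w_def by auto
    moreover have "w + \<delta> \<in> J i" using i d unfolding \<eta>'_def iet_J_def by auto
    ultimately have "(T^^Suc m) (z + \<delta>) = w + \<delta> - b (i - 1) + bt (tau i - 1)"
      using T_J[OF i(1)] by simp
    moreover have "(T^^Suc m) z = w - b (i - 1) + bt (tau i - 1)"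
      using T_J[OF i] unfolding w_def by simp
    ultimately show ?thesis by simp
  qed
  ultimately show ?case by blast
qed

end

context iet begin

lemma split_tau: "j \<in> {1..n-1} \<Longrightarrow> tau (j + 1) \<noteq> tau j + 1"
  using fs unfolding fully_split_perm_def split_perm_def by blast

lemma bD: "i \<in> {1..n-1} \<Longrightarrow> b i \<in> D" unfolding D_eq by blast

lemma lemC:
  assumes i: "i \<in> {1..n-1}" and L: "L \<ge> 1"
  shows "(Tt^^L) (b i) \<noteq> (T^^L) (b i)"
proof
  assume eq0: "(Tt^^L) (b i) = (T^^L) (b i)"
  define P where "P L \<longleftrightarrow> L \<ge> 1 \<and> (Tt^^L) (b i) = (T^^L) (b i)" for L
  have PL: "P L" using eq0 L P_def by auto
  define L0 where "L0 = (LEAST L. P L)"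
  have P0: "P L0" unfolding L0_def using PL by (rule LeastI)
  have min: "\<not> P L'" if "L' < L0" for L' using that unfolding L0_def using not_less_Least by blast
  have biD: "b i \<in> D" using bD[OF i] .
  have bir: "0 < b i" "b i < 1" using D_range[OF biD] by auto
  have i1: "i \<in> {1..n}" "i + 1 \<in> {1..n}" using i by auto
  have Tbi: "T (b i) = bt (tau (i + 1) - 1)" using T_b[OF i1(2)] by simp
  have Ttbi: "Tt (b i) = bt (tau i)" using Tt_b[OF i1(1)] .
  have ti: "tau i \<in> {1..n}" "tau (i + 1) \<in> {1..n}" using tau_in i1 by auto
  show False
  proof (cases "L0 = 1")
    case True
    then have "bt (tau i) = bt (tau (i + 1) - 1)" using P0 Tbi Ttbi unfolding P_def by simp
    then have "tau i = tau (i + 1) - 1" using bt_eq_iff ti by auto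
    then have "tau (i + 1) = tau i + 1" using ti by auto
    then show False using split_tau[OF i] by simp
  next
    case False
    have "L0 \<ge> 2" using P0 False unfolding P_def by auto
    then obtain L1 where L1: "L0 = Suc L1" "L1 \<ge> 1" by (cases L0) auto
    define r where "r = (T^^L1) (b i)"
    define l where "l = (Tt^^L1) (b i)"
    have lr: "l \<noteq> r" using min[of L1] L1 unfolding P_def l_def r_def by auto
    have Tlr: "Tt l = T r" using P0 L1 unfolding P_def l_def r_def by (simp add: funpow_swap1)
    have rr: "0 \<le> r" "r < 1" using Tn_range bir unfolding r_def by auto
    have lrng: "0 < l" "l \<le> 1" using Ttn_range bir unfolding l_def by auto
    have rnD: "r \<notin> D" using keaneD[OF biD L1(2)] unfolding r_def .
    show False
    proof (cases "r = 0")
      case False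
      then have "T r = Tt r" using T_eq_Tt rr rnD by auto
      then have "l = r" using Tt_inj[of l r] Tlr lrng rr False by auto
      then show False using lr by simp
    next
      case True
      have L11: "L1 = 1"
      proof (rule ccontr)
        assume "L1 \<noteq> 1"
        then have "L1 \<ge> 2" using L1 by auto
        then obtain L2 where L2: "L1 = Suc L2" "L2 \<ge> 1" by (cases L1) auto
        have "T ((T^^L2) (b i)) = T e" using True Te unfolding r_def L2 by simp
        then have "(T^^L2) (b i) = e" using T_inj[of "(T^^L2) (b i)" e] Tn_range[of "b i" L2] bir e_range by auto
        then show False using keaneD[OF biD L2(2)] e_D by simp
      qed
      have Tbi0: "T (b i) = 0" using True L11 unfolding r_def by simp
      have "b i = e" using T_inj[of "b i" e] Tbi0 Te bir e_range by auto
      have l1: "l = bt (tau i)" using L11 Ttbi unfolding l_def by simp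
      have T0: "T 0 = bt (tau 1 - 1)" using T_b[of 1] n2 b0 by simp
      have Ttl: "Tt l = T 0" using Tlr True by simp
      have t1: "tau 1 \<in> {1..n}" "tau n \<in> {1..n}" using tau_in n2 by auto
      show False
      proof (cases "tau i = n")
        case True
        then have "l = b n" using l1 btn bn by simp
        then have "Tt l = bt (tau n)" using Tt_b[of n] n2 by simp
        then have "bt (tau n) = bt (tau 1 - 1)" using Ttl T0 by simp
        then have "tau n = tau 1 - 1" using bt_eq_iff t1 by auto
        then have "tau 1 = tau n + 1" using t1 by auto
        then show False using fs unfolding fully_split_perm_def by simp
      next
        case False
        define i' where "i' = inv tau (tau i + 1)"
        have i': "i' \<in> {1..n}" "tau i' = tau i + 1" unfolding i'_def
          using invtau_in[of "tau i + 1"] tau_inv1 ti False by auto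
        have lT: "l = T (b (i' - 1))" using T_b[OF i'(1)] i'(2) l1 by simp
        show False
        proof (cases "i' = 1")
          case True
          then have "l = T 0" using lT b0 by simp
          then have "Tt (b i) = Tt l" using Ttbi l1 Ttl by simp
          then have "b i = l" using Tt_inj[of "b i" l] bir lrng by auto
          then have "(T^^2) (b i) = b i" using Tbi0 \<open>l = T 0\<close> by (simp add: numeral_2_eq_2)
          then show False using keaneD[OF biD, of 2] biD by simp
        next
          case False
          then have "i' - 1 \<in> {1..n-1}" using i' by auto
          then have dD: "b (i' - 1) \<in> D" by (rule bD)
          then have "l \<notin> D" using keaneD[OF dD, of 1] lT by simp
          moreover have "l < 1"
          proof -
            have "bt (tau i) < bt n" using bt_less[of "tau i" n] False \<open>tau i \<noteq> n\<close> ti by auto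
            then show ?thesis using l1 btn by simp
          qed
          ultimately have "T l = Tt l" using T_eq_Tt lrng by auto
          then have "T (T (b (i' - 1))) = T (T (b i))" using Ttl Tbi0 lT by simp
          moreover have dr: "0 \<le> b (i' - 1)" "b (i' - 1) < 1" using D_range[OF dD] by auto
          ultimately have "T (b (i' - 1)) = T (b i)"
            using T_inj[of "T (b (i' - 1))" "T (b i)"] T_range[of "b (i' - 1)"] T_range[of "b i"] bir by auto
          then have "b (i' - 1) = b i" using T_inj[of "b (i' - 1)" "b i"] dr bir by auto
          then have "i' - 1 = i" using b_eq_iff i' i by auto
          then have "tau (i + 1) = tau i + 1" using i' by auto
          then show False using split_tau[OF i] by simp
        qed
      qed
    qed
  qed
qed

end

context iet begin

definition "g = inv_into {0..<1} T"
definition "idx z = (THE i. i \<in> {1..n} \<and> z \<in> J i)"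

lemma g_prop: "0 \<le> y \<Longrightarrow> y < 1 \<Longrightarrow> 0 \<le> g y \<and> g y < 1 \<and> T (g y) = y"
proof -
  assume y: "0 \<le> y" "y < 1"
  then have "y \<in> T ` {0..<1}" using T_surj by fastforce
  then have "inv_into {0..<1} T y \<in> {0..<1}" "T (inv_into {0..<1} T y) = y"
    using inv_into_into[of y T] f_inv_into_f[of y T] by blast+
  then show ?thesis unfolding g_def by simp
qed

lemma gn_range: "0 \<le> y \<Longrightarrow> y < 1 \<Longrightarrow> 0 \<le> (g^^m) y \<and> (g^^m) y < 1"
  by (induction m) (auto simp: g_prop)

lemma T_g: "j \<le> M \<Longrightarrow> 0 \<le> y \<Longrightarrow> y < 1 \<Longrightarrow> (T^^j) ((g^^M) y) = (g^^(M - j)) y"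
proof (induction j)
  case 0 then show ?case by simp
next
  case (Suc j)
  then have "(T^^Suc j) ((g^^M) y) = T ((g^^(M - j)) y)" by simp
  also have "(g^^(M - j)) y = g ((g^^(M - Suc j)) y)" using Suc.prems
    by (metis Suc_diff_Suc comp_apply funpow.simps(2) less_eq_Suc_le)
  also have "T \<dots> = (g^^(M - Suc j)) y" using g_prop gn_range Suc.prems by blast
  finally show ?case .
qed

lemma Tpow_shift: "0 \<le> x \<Longrightarrow> x < 1 \<Longrightarrow> (T^^j) ((g^^M) x) = iet_Tpow n a tau (int j - int M) x"
proof (cases "j \<le> M")
  case True
  assume x: "0 \<le> x" "x < 1"
  show ?thesis
  proof (cases "j = M")
    case True then show ?thesis using T_g[of j M x] x by (simp add: iet_Tpow_def)
  next
    case False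
    then have "nat (- (int j - int M)) = M - j" using True by auto
    then show ?thesis using T_g[OF True x] False True unfolding iet_Tpow_def g_def by auto
  qed
next
  case False
  assume x: "0 \<le> x" "x < 1"
  have "(T^^j) ((g^^M) x) = (T^^(j - M)) ((T^^M) ((g^^M) x))"
    using False by (simp add: funpow_add[symmetric, unfolded comp_def] funpow_comm)
  also have "(T^^M) ((g^^M) x) = x" using T_g[of M M x] x by simp
  finally show ?thesis using False unfolding iet_Tpow_def by (simp add: nat_diff_distrib)
qed

lemma idx_prop: "0 \<le> z \<Longrightarrow> z < 1 \<Longrightarrow> idx z \<in> {1..n} \<and> z \<in> J (idx z)"
proof -
  assume z: "0 \<le> z" "z < 1"
  have "\<exists>!i. i \<in> {1..n} \<and> z \<in> J i" using J_exists[OF z] J_unique by blast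
  then show ?thesis unfolding idx_def by (rule theI')
qed

lemma sJ_idx: "0 \<le> p \<Longrightarrow> p < 1 \<Longrightarrow> 0 \<le> q \<Longrightarrow> q < 1 \<Longrightarrow> sJ p q \<longleftrightarrow> idx p = idx q"
  using idx_prop[of p] idx_prop[of q] J_unique unfolding sJ_def by metis

lemma itin_idx: "iet_itin n a tau x k = idx (iet_Tpow n a tau k x)"
  unfolding iet_itin_def idx_def ..

lemma R_range: "x \<in> iet_R n a tau \<Longrightarrow> 0 \<le> x \<and> x < 1"
  unfolding iet_R_def iet_Dinf_def by auto

lemma seg_abs:
  assumes "0 \<le> u" "u < 1" "0 \<le> v" "v < 1" "\<forall>j<m. sJ ((T^^j) u) ((T^^j) v)"
  shows "(T^^m) u - (T^^m) v = u - v"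
proof (cases "u \<le> v")
  case True
  then show ?thesis using seg[OF assms(1) True assms(4,5), of v] by auto
next
  case False
  have "\<forall>j<m. sJ ((T^^j) v) ((T^^j) u)" using assms(5) sJ_sym by blast
  then show ?thesis using seg[OF assms(3), of u m u] False assms by auto
qed

lemma unifL_abs:
  assumes "\<epsilon> > 0"
  shows "\<exists>K. \<forall>u v. 0 \<le> u \<longrightarrow> u < 1 \<longrightarrow> 0 \<le> v \<longrightarrow> v < 1 \<longrightarrow> (\<forall>j\<le>K. sJ ((T^^j) u) ((T^^j) v)) \<longrightarrow> \<bar>u - v\<bar> < \<epsilon>"
proof -
  obtain K where K: "\<forall>u v. 0 \<le> u \<longrightarrow> u \<le> v \<longrightarrow> v < 1 \<longrightarrow> (\<forall>j\<le>K. sJ ((T^^j) u) ((T^^j) v)) \<longrightarrow> v - u < \<epsilon>"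
    using unifL[OF assms] by blast
  show ?thesis
  proof (intro exI[of _ K] allI impI)
    fix u v :: real
    assume uv: "0 \<le> u" "u < 1" "0 \<le> v" "v < 1" and s: "\<forall>j\<le>K. sJ ((T^^j) u) ((T^^j) v)"
    show "\<bar>u - v\<bar> < \<epsilon>"
    proof (cases "u \<le> v")
      case True then show ?thesis using K uv s by fastforce
    next
      case False
      have "\<forall>j\<le>K. sJ ((T^^j) v) ((T^^j) u)" using s sJ_sym by blast
      then show ?thesis using K uv False by fastforce
    qed
  qed
qed

end

context iet begin

lemma main:
  assumes A: "\<alpha> \<in> iet_X n a tau" and B: "\<beta> \<in> iet_X n a tau"
    and agree: "\<forall>i::int. \<bar>i\<bar> \<ge> int N \<longrightarrow> \<alpha> i = \<beta> i"
  shows "\<alpha> = \<beta>"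
proof (rule ccontr)
  assume ne: "\<alpha> \<noteq> \<beta>"
  then obtain k0 where k0: "\<alpha> k0 \<noteq> \<beta> k0" by blast
  then have k0N: "\<bar>k0\<bar> < int N" using agree by force
  define S where "S = {m::nat. \<alpha> (- int N + int m) \<noteq> \<beta> (- int N + int m)}"
  have "nat (k0 + int N) \<in> S" unfolding S_def using k0 k0N by auto
  define m0 where "m0 = (LEAST m. m \<in> S)"
  have m0S: "m0 \<in> S" unfolding m0_def using \<open>nat (k0 + int N) \<in> S\<close> by (rule LeastI)
  define f where "f = - int N + int m0"
  have ff: "\<alpha> f \<noteq> \<beta> f" using m0S unfolding S_def f_def by simp
  have fN: "- int N < f" "f < int N" using ff agree by force+
  have fmin: "\<alpha> k = \<beta> k" if "k < f" for k
  proof (cases "k \<le> - int N")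
    case True then show ?thesis using agree by auto
  next
    case False
    then have "nat (k + int N) < m0" using that unfolding f_def by auto
    then have "nat (k + int N) \<notin> S" unfolding m0_def by (rule not_less_Least)
    then show ?thesis using False unfolding S_def by auto
  qed
  define L where "L = nat (int N - f)"
  have L1: "L \<ge> 1" using fN L_def by auto
  have gap: "\<bar>(Tt^^L) (b i) - (T^^L) (b i)\<bar> > 0" if "i \<in> {1..n-1}" for i
    using lemC[OF that L1] by auto
  have bi_r: "0 < b i \<and> b i < 1" if "i \<in> {1..n-1}" for i using D_range bD that by blast
  define l\<eta> where "l\<eta> i = (SOME \<eta>. \<eta> > 0 \<and> (\<forall>\<delta>. 0 < \<delta> \<and> \<delta> < \<eta> \<longrightarrow> (T^^L) (b i - \<delta>) = (Tt^^L) (b i) - \<delta>))" for i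
  define r\<eta> where "r\<eta> i = (SOME \<eta>. \<eta> > 0 \<and> (\<forall>\<delta>. 0 \<le> \<delta> \<and> \<delta> < \<eta> \<longrightarrow> (T^^L) (b i + \<delta>) = (T^^L) (b i) + \<delta>))" for i
  have l\<eta>: "l\<eta> i > 0 \<and> (\<forall>\<delta>. 0 < \<delta> \<and> \<delta> < l\<eta> i \<longrightarrow> (T^^L) (b i - \<delta>) = (Tt^^L) (b i) - \<delta>)"
    if "i \<in> {1..n-1}" for i
  proof -
    have "\<exists>\<eta>>0. \<forall>\<delta>. 0 < \<delta> \<and> \<delta> < \<eta> \<longrightarrow> (T^^L) (b i - \<delta>) = (Tt^^L) (b i) - \<delta>"
      by (rule left_track) (use bi_r[OF that] in auto)
    then show ?thesis unfolding l\<eta>_def by (rule someI_ex)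
  qed
  have r\<eta>: "r\<eta> i > 0 \<and> (\<forall>\<delta>. 0 \<le> \<delta> \<and> \<delta> < r\<eta> i \<longrightarrow> (T^^L) (b i + \<delta>) = (T^^L) (b i) + \<delta>)"
    if "i \<in> {1..n-1}" for i
  proof -
    have "\<exists>\<eta>>0. \<forall>\<delta>. 0 \<le> \<delta> \<and> \<delta> < \<eta> \<longrightarrow> (T^^L) (b i + \<delta>) = (T^^L) (b i) + \<delta>"
      by (rule right_track) (use bi_r[OF that] in auto)
    then show ?thesis unfolding r\<eta>_def by (rule someI_ex)
  qed
  define \<epsilon>0 where "\<epsilon>0 i = min (min (l\<eta> i) (r\<eta> i)) (\<bar>(Tt^^L) (b i) - (T^^L) (b i)\<bar> / 3)" for i
  define \<epsilon> where "\<epsilon> = Min (\<epsilon>0 ` {1..n-1})"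
  have ne1: "{1..n-1} \<noteq> {}" using n2 by auto
  have \<epsilon>pos: "\<epsilon> > 0" unfolding \<epsilon>_def using ne1 l\<eta> r\<eta> gap
    by (subst Min_gr_iff) (auto simp: \<epsilon>0_def)
  have \<epsilon>le: "\<epsilon> \<le> \<epsilon>0 i" if "i \<in> {1..n-1}" for i unfolding \<epsilon>_def using that by simp
  obtain K where K: "\<forall>u v. 0 \<le> u \<longrightarrow> u < 1 \<longrightarrow> 0 \<le> v \<longrightarrow> v < 1 \<longrightarrow> (\<forall>j\<le>K. sJ ((T^^j) u) ((T^^j) v)) \<longrightarrow> \<bar>u - v\<bar> < \<epsilon>"
    using unifL_abs[OF \<epsilon>pos] by blast
  define M where "M = K + N + 1"
  obtain \<gamma>1 where \<gamma>1: "\<gamma>1 \<in> iet_itin n a tau ` iet_R n a tau" "\<forall>k. \<bar>k\<bar> \<le> int M \<longrightarrow> \<gamma>1 k = \<alpha> k"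
    using closure_approx[of \<alpha> _ M] A unfolding iet_X_def by blast
  obtain \<gamma>2 where \<gamma>2: "\<gamma>2 \<in> iet_itin n a tau ` iet_R n a tau" "\<forall>k. \<bar>k\<bar> \<le> int M \<longrightarrow> \<gamma>2 k = \<beta> k"
    using closure_approx[of \<beta> _ M] B unfolding iet_X_def by blast
  obtain x where x: "x \<in> iet_R n a tau" "\<gamma>1 = iet_itin n a tau x" using \<gamma>1 by blast
  obtain y where y: "y \<in> iet_R n a tau" "\<gamma>2 = iet_itin n a tau y" using \<gamma>2 by blast
  have xr: "0 \<le> x" "x < 1" using R_range[OF x(1)] by auto
  have yr: "0 \<le> y" "y < 1" using R_range[OF y(1)] by auto
  define x0 where "x0 = (g^^M) x"
  define y0 where "y0 = (g^^M) y"
  have x0r: "0 \<le> x0" "x0 < 1" using gn_range xr x0_def by auto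
  have y0r: "0 \<le> y0" "y0 < 1" using gn_range yr y0_def by auto
  have Xr: "0 \<le> (T^^j) x0 \<and> (T^^j) x0 < 1" for j using Tn_range x0r by auto
  have Yr: "0 \<le> (T^^j) y0 \<and> (T^^j) y0 < 1" for j using Tn_range y0r by auto
  have key: "sJ ((T^^j) x0) ((T^^j) y0) \<longleftrightarrow> \<alpha> (int j - int M) = \<beta> (int j - int M)" if "j \<le> 2 * M" for j
  proof -
    have ab: "\<bar>int j - int M\<bar> \<le> int M" using that by auto
    have "\<alpha> (int j - int M) = idx ((T^^j) x0)"
      using \<gamma>1(2) ab x(2) Tpow_shift[OF xr, of j M] unfolding x0_def itin_idx by auto
    moreover have "\<beta> (int j - int M) = idx ((T^^j) y0)"
      using \<gamma>2(2) ab y(2) Tpow_shift[OF yr, of j M] unfolding y0_def itin_idx by auto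
    ultimately show ?thesis using sJ_idx Xr Yr by auto
  qed
  define F where "F = nat (int M + f)"
  have Fi: "int F = int M + f" unfolding F_def M_def using fN by auto
  have FL: "F + L = M + N" using Fi fN unfolding L_def by auto
  have pre: "sJ ((T^^j) x0) ((T^^j) y0)" if "j < F" for j
  proof -
    have "j \<le> 2 * M" using that Fi fN unfolding M_def by auto
    moreover have "int j - int M < f" using that Fi by auto
    ultimately show ?thesis using key fmin by auto
  qed
  have "\<bar>x0 - y0\<bar> < \<epsilon>"
  proof -
    have "\<forall>j\<le>K. sJ ((T^^j) x0) ((T^^j) y0)" using pre Fi fN unfolding M_def by auto
    then show ?thesis using K x0r y0r by blast
  qed
  moreover have "(T^^F) x0 - (T^^F) y0 = x0 - y0" using seg_abs[OF x0r y0r] pre by blast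
  ultimately have dF: "\<bar>(T^^F) x0 - (T^^F) y0\<bar> < \<epsilon>" by simp
  have nsF: "\<not> sJ ((T^^F) x0) ((T^^F) y0)"
  proof -
    have "F \<le> 2 * M" using Fi fN unfolding M_def by auto
    moreover have "int F - int M = f" using Fi by auto
    ultimately show ?thesis using key ff by auto
  qed
  have post: "\<bar>(T^^(M + N)) x0 - (T^^(M + N)) y0\<bar> < \<epsilon>"
  proof -
    have "\<forall>j\<le>K. sJ ((T^^j) ((T^^(M + N)) x0)) ((T^^j) ((T^^(M + N)) y0))"
    proof (intro allI impI)
      fix j assume j: "j \<le> K"
      have "j + (M + N) \<le> 2 * M" using j unfolding M_def by auto
      moreover have "\<alpha> (int (j + (M + N)) - int M) = \<beta> (int (j + (M + N)) - int M)"
        using agree by auto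
      ultimately show "sJ ((T^^j) ((T^^(M + N)) x0)) ((T^^j) ((T^^(M + N)) y0))"
        using key unfolding funpow_comm by blast
    qed
    then show ?thesis using K Xr Yr by blast
  qed
  define p where "p = min ((T^^F) x0) ((T^^F) y0)"
  define q where "q = max ((T^^F) x0) ((T^^F) y0)"
  have pq: "0 \<le> p" "p \<le> q" "q < 1" "\<not> sJ p q" "q - p < \<epsilon>"
    using Xr Yr nsF dF sJ_sym unfolding p_def q_def by (auto simp: min_def max_def)
  have LpLq: "\<bar>(T^^L) p - (T^^L) q\<bar> < \<epsilon>"
  proof (cases "(T^^F) x0 \<le> (T^^F) y0")
    case True
    then have "(T^^L) p = (T^^(M+N)) x0" "(T^^L) q = (T^^(M+N)) y0"
      unfolding p_def q_def FL[symmetric] by (simp_all add: funpow_comm add.commute)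
    then show ?thesis using post by simp
  next
    case False
    then have "(T^^L) p = (T^^(M+N)) y0" "(T^^L) q = (T^^(M+N)) x0"
      unfolding p_def q_def FL[symmetric] by (simp_all add: funpow_comm add.commute)
    then show ?thesis using post by simp
  qed
  obtain i where i: "i \<in> {1..n-1}" "p < b i" "b i \<le> q" using cross[OF pq(1,2,3,4)] by blast
  define \<delta> where "\<delta> = b i - p"
  define \<delta>' where "\<delta>' = q - b i"
  have e0: "\<epsilon> \<le> l\<eta> i" "\<epsilon> \<le> r\<eta> i" "\<epsilon> \<le> \<bar>(Tt^^L) (b i) - (T^^L) (b i)\<bar> / 3"
    using \<epsilon>le[OF i(1)] unfolding \<epsilon>0_def by auto
  have d1: "0 < \<delta>" "\<delta> < l\<eta> i" using i pq e0 unfolding \<delta>_def by auto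
  have d2: "0 \<le> \<delta>'" "\<delta>' < r\<eta> i" using i pq e0 unfolding \<delta>'_def by auto
  have "(T^^L) (b i - \<delta>) = (Tt^^L) (b i) - \<delta>" using l\<eta>[OF i(1)] d1 by blast
  then have Lp: "(T^^L) p = (Tt^^L) (b i) - \<delta>" unfolding \<delta>_def by simp
  have "(T^^L) (b i + \<delta>') = (T^^L) (b i) + \<delta>'" using r\<eta>[OF i(1)] d2 by blast
  then have Lq: "(T^^L) q = (T^^L) (b i) + \<delta>'" unfolding \<delta>'_def by simp
  have "\<bar>(Tt^^L) (b i) - (T^^L) (b i)\<bar> < 3 * \<epsilon>"
    using LpLq Lp Lq d1 d2 pq unfolding \<delta>_def \<delta>'_def by linarith
  moreover have "3 * \<epsilon> \<le> \<bar>(Tt^^L) (b i) - (T^^L) (b i)\<bar>" using e0(3) by (simp add: field_simps)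
  ultimately show False by linarith
qed

end

theorem theorem4p6:
  fixes n :: nat and a :: "nat \<Rightarrow> real" and tau :: "nat \<Rightarrow> nat"
  assumes "n \<ge> 2"
    and "\<forall>i\<in>{1..n}. a i > 0"
    and "(\<Sum>i=1..n. a i) = 1"
    and "tau permutes {1..n}"
    and "irreducible_perm n tau"
    and "fully_split_perm n tau"
    and "keane_condition n a tau"
  shows "\<forall>\<alpha>\<in>iet_X n a tau. \<forall>\<beta>\<in>iet_X n a tau.
           (\<exists>N::nat. \<forall>i::int. \<bar>i\<bar> \<ge> int N \<longrightarrow> \<alpha> i = \<beta> i) \<longrightarrow> \<alpha> = \<beta>"
proof -
  interpret iet n a tau by (rule iet.intro) (fact assms)+
  show ?thesis using main by blast
qed

end
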